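(* Let $z=(z^+,z^-)$ be a bi-sequence of $n$ nonnegative integers, and let $f_z(a)=\sum_i|z_i^+-a_i^+|+\sum_i|z_i^--a_i^-|$. Let $d\in B_n$ satisfy $f_z(d)=\min_{a\in B_n}f_z(a)$. (1) There exists $d_*\in B_n$ with $d_{*i}^+\le z_i^+$ for all $i$ and $f_z(d_* )=f_z(d)$. (2) There exists $d_*\in B_n$ with $d_{*i}^-\le z_i^-$ for all $i$ and $f_z(d_* )=f_z(d)$.
   Context: $B_n$ is the set of all bi-degree sequences $a=(a^+,a^-)$ (out-degrees $a_i^+$, in-degrees $a_i^-$) of simple directed graphs (no loops, no multiple edges) on nodes $\{1,\dots,n\}$. *)

theory Defs
  imports Main
begin

(* Nodes are 0..<n (the paper's 1..n shifted). A simple directed graph on these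
   nodes is a set of arcs without loops; multiple arcs are impossible in a set. *)
definition simple_digraph :: "nat \<Rightarrow> (nat \<times> nat) set \<Rightarrow> bool" where
  "simple_digraph n E \<longleftrightarrow> E \<subseteq> {(i, j). i < n \<and> j < n \<and> i \<noteq> j}"

definition bidegree :: "nat \<Rightarrow> (nat \<times> nat) set \<Rightarrow> (nat \<Rightarrow> nat) \<times> (nat \<Rightarrow> nat)" where
  "bidegree n E =
     ((\<lambda>i. if i < n then card {j. (i, j) \<in> E} else 0),
      (\<lambda>i. if i < n then card {j. (j, i) \<in> E} else 0))"

definition B :: "nat \<Rightarrow> ((nat \<Rightarrow> nat) \<times> (nat \<Rightarrow> nat)) set" where
  "B n = {bidegree n E | E. simple_digraph n E}"

definition f :: "nat \<Rightarrow> (nat \<Rightarrow> nat) \<times> (nat \<Rightarrow> nat) \<Rightarrow> (nat \<Rightarrow> nat) \<times> (nat \<Rightarrow> nat) \<Rightarrow> int" where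
  "f n z a = (\<Sum>i<n. \<bar>int (fst z i) - int (fst a i)\<bar>) + (\<Sum>i<n. \<bar>int (snd z i) - int (snd a i)\<bar>)"

end

theory Submission
  imports Defs
begin

lemma sd_finite: "simple_digraph n E \<Longrightarrow> finite E"
  unfolding simple_digraph_def
  by (rule finite_subset[of _ "{..<n} \<times> {..<n}"]) auto

lemma fin_out: "finite E \<Longrightarrow> finite {j. (i, j) \<in> E}"
proof -
  assume "finite E"
  then have "finite (snd ` E)" by simp
  moreover have "{j. (i, j) \<in> E} \<subseteq> snd ` E" by force
  ultimately show ?thesis by (rule rev_finite_subset)
qed

lemma fin_in: "finite E \<Longrightarrow> finite {j. (j, i) \<in> E}"
proof -
  assume "finite E"
  then have "finite (fst ` E)" by simp
  moreover have "{j. (j, i) \<in> E} \<subseteq> fst ` E" by force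
  ultimately show ?thesis by (rule rev_finite_subset)
qed

lemma step:
  assumes sd: "simple_digraph n E" and ij: "(i, j) \<in> E"
    and big: "fst (bidegree n E) i > fst z i"
  shows "f n z (bidegree n (E - {(i, j)})) \<le> f n z (bidegree n E)"
proof -
  have fin: "finite E" using sd by (rule sd_finite)
  have iln: "i < n" and jln: "j < n" using sd ij unfolding simple_digraph_def by auto
  define E' where "E' = E - {(i, j)}"
  have o1: "card {k. (i, k) \<in> E'} = card {k. (i, k) \<in> E} - 1"
  proof -
    have "{k. (i, k) \<in> E'} = {k. (i, k) \<in> E} - {j}" unfolding E'_def by auto
    then show ?thesis using ij fin_out[OF fin, of i] by simp
  qed
  have o2: "k \<noteq> i \<Longrightarrow> {l. (k, l) \<in> E'} = {l. (k, l) \<in> E}" for k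
    unfolding E'_def by auto
  have i1: "card {k. (k, j) \<in> E'} = card {k. (k, j) \<in> E} - 1"
  proof -
    have "{k. (k, j) \<in> E'} = {k. (k, j) \<in> E} - {i}" unfolding E'_def by auto
    then show ?thesis using ij fin_in[OF fin, of j] by simp
  qed
  have i2: "k \<noteq> j \<Longrightarrow> {l. (l, k) \<in> E'} = {l. (l, k) \<in> E}" for k
    unfolding E'_def by auto
  have cpos: "card {k. (i, k) \<in> E} > 0" using ij fin_out[OF fin, of i] card_gt_0_iff by blast
  have cpos2: "card {k. (k, j) \<in> E} > 0" using ij fin_in[OF fin, of j] card_gt_0_iff by blast
  define g where "g = (\<lambda>k. \<bar>int (fst z k) - int (fst (bidegree n E) k)\<bar>)"
  define g' where "g' = (\<lambda>k. \<bar>int (fst z k) - int (fst (bidegree n E') k)\<bar>)"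
  define h where "h = (\<lambda>k. \<bar>int (snd z k) - int (snd (bidegree n E) k)\<bar>)"
  define h' where "h' = (\<lambda>k. \<bar>int (snd z k) - int (snd (bidegree n E') k)\<bar>)"
  have gi: "g' i = g i - 1" using big iln o1 cpos unfolding g_def g'_def bidegree_def by auto
  have go: "k \<noteq> i \<Longrightarrow> g' k = g k" for k using o2[of k] unfolding g_def g'_def bidegree_def by auto
  have hj: "h' j \<le> h j + 1" using jln i1 cpos2 unfolding h_def h'_def bidegree_def by auto
  have ho: "k \<noteq> j \<Longrightarrow> h' k = h k" for k using i2[of k] unfolding h_def h'_def bidegree_def by auto
  have "sum g' {..<n} = g' i + sum g' ({..<n} - {i})" using iln by (simp add: sum.remove)
  also have "sum g' ({..<n} - {i}) = sum g ({..<n} - {i})" using go by (intro sum.cong) auto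
  finally have A1: "sum g' {..<n} = g' i + sum g ({..<n} - {i})" .
  have "g i + sum g ({..<n} - {i}) = sum g {..<n}" using iln by (simp add: sum.remove)
  then have S1: "sum g' {..<n} = sum g {..<n} - 1" using gi A1 by simp
  have "sum h' {..<n} = h' j + sum h' ({..<n} - {j})" using jln by (simp add: sum.remove)
  also have "sum h' ({..<n} - {j}) = sum h ({..<n} - {j})" using ho by (intro sum.cong) auto
  finally have A2: "sum h' {..<n} = h' j + sum h ({..<n} - {j})" .
  have "h j + sum h ({..<n} - {j}) = sum h {..<n}" using jln by (simp add: sum.remove)
  then have S2: "sum h' {..<n} \<le> sum h {..<n} + 1" using hj A2 by simp
  have "f n z (bidegree n E') = sum g' {..<n} + sum h' {..<n}"
    unfolding f_def g'_def h'_def by simp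
  moreover have "f n z (bidegree n E) = sum g {..<n} + sum h {..<n}"
    unfolding f_def g_def h_def by simp
  ultimately show ?thesis using S1 S2 unfolding E'_def by simp
qed

lemma part1:
  "simple_digraph n E \<Longrightarrow> (\<forall>a\<in>B n. f n z (bidegree n E) \<le> f n z a) \<Longrightarrow>
   \<exists>ds\<in>B n. (\<forall>i<n. fst ds i \<le> fst z i) \<and> f n z ds = f n z (bidegree n E)"
proof (induction "card E" arbitrary: E rule: less_induct)
  case less
  show ?case
  proof (cases "\<forall>i<n. fst (bidegree n E) i \<le> fst z i")
    case True
    then show ?thesis using less.prems unfolding B_def by blast
  next
    case False
    then obtain i where iln: "i < n" and big: "fst (bidegree n E) i > fst z i" by (auto simp: not_le)
    then have "card {k. (i, k) \<in> E} > 0" unfolding bidegree_def by simp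
    then obtain j where ij: "(i, j) \<in> E" by (metis (no_types, lifting) card.empty empty_Collect_eq less_irrefl)
    define E' where "E' = E - {(i, j)}"
    have sd': "simple_digraph n E'" using less.prems(1) unfolding E'_def simple_digraph_def by auto
    have le: "f n z (bidegree n E') \<le> f n z (bidegree n E)"
      unfolding E'_def by (rule step[OF less.prems(1) ij big])
    have "bidegree n E' \<in> B n" using sd' unfolding B_def by blast
    then have ge: "f n z (bidegree n E) \<le> f n z (bidegree n E')" using less.prems(2) by blast
    have eq: "f n z (bidegree n E') = f n z (bidegree n E)" using le ge by simp
    have "card E' < card E" unfolding E'_def using card_Diff1_less[OF sd_finite[OF less.prems(1)] ij] .
    moreover have "\<forall>a\<in>B n. f n z (bidegree n E') \<le> f n z a" using eq less.prems(2) by simp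
    ultimately show ?thesis using less.hyps[OF _ sd'] eq by metis
  qed
qed

lemma swap_sd: "simple_digraph n (converse E) = simple_digraph n E"
  unfolding simple_digraph_def by blast

lemma swap_bd: "bidegree n (converse E) = prod.swap (bidegree n E)"
proof -
  have a: "\<And>i. {j. (i, j) \<in> E\<inverse>} = {j. (j, i) \<in> E}" by blast
  have b: "\<And>i. {j. (j, i) \<in> E\<inverse>} = {j. (i, j) \<in> E}" by blast
  show ?thesis unfolding bidegree_def a b by simp
qed

lemma swap_f: "f n (prod.swap z) (prod.swap a) = f n z a"
  unfolding f_def by simp

lemma swap_B: "a \<in> B n \<Longrightarrow> prod.swap a \<in> B n"
proof -
  assume "a \<in> B n"
  then obtain E where "simple_digraph n E" "a = bidegree n E" unfolding B_def by blast
  then have "prod.swap a = bidegree n (converse E)" "simple_digraph n (converse E)"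
    using swap_bd swap_sd by simp_all
  then show ?thesis unfolding B_def by blast
qed

theorem proposition4:
  fixes n :: nat and z d :: "(nat \<Rightarrow> nat) \<times> (nat \<Rightarrow> nat)"
  assumes "d \<in> B n"
    and "\<forall>a \<in> B n. f n z d \<le> f n z a"
  shows "(\<exists>ds \<in> B n. (\<forall>i<n. fst ds i \<le> fst z i) \<and> f n z ds = f n z d)
       \<and> (\<exists>ds \<in> B n. (\<forall>i<n. snd ds i \<le> snd z i) \<and> f n z ds = f n z d)"
proof
  obtain E where E: "simple_digraph n E" "d = bidegree n E" using assms(1) unfolding B_def by blast
  show "\<exists>ds \<in> B n. (\<forall>i<n. fst ds i \<le> fst z i) \<and> f n z ds = f n z d"
    using part1[OF E(1)] assms(2) unfolding E(2) by blast
  have sd: "simple_digraph n (converse E)" using E(1) swap_sd by simp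
  have opt: "\<forall>a\<in>B n. f n (prod.swap z) (bidegree n (converse E)) \<le> f n (prod.swap z) a"
  proof
    fix a assume "a \<in> B n"
    then have "prod.swap a \<in> B n" by (rule swap_B)
    then have "f n z d \<le> f n z (prod.swap a)" using assms(2) by blast
    moreover have "f n (prod.swap z) (bidegree n (converse E)) = f n z d"
      unfolding swap_bd E(2) by (rule swap_f)
    moreover have "f n (prod.swap z) a = f n z (prod.swap a)"
      using swap_f[of n z "prod.swap a"] by simp
    ultimately show "f n (prod.swap z) (bidegree n (converse E)) \<le> f n (prod.swap z) a"
      by simp
  qed
  obtain ds where ds: "ds \<in> B n" "\<forall>i<n. fst ds i \<le> fst (prod.swap z) i"
     "f n (prod.swap z) ds = f n (prod.swap z) (bidegree n (converse E))"
    using part1[OF sd opt] by blast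
  have "prod.swap ds \<in> B n" using ds(1) by (rule swap_B)
  moreover have "\<forall>i<n. snd (prod.swap ds) i \<le> snd z i" using ds(2) by simp
  moreover have "f n z (prod.swap ds) = f n z d"
  proof -
    have "f n z (prod.swap ds) = f n (prod.swap z) ds"
      using swap_f[of n z "prod.swap ds"] by simp
    also have "\<dots> = f n (prod.swap z) (bidegree n (converse E))" by (rule ds(3))
    also have "\<dots> = f n z d" unfolding swap_bd E(2) by (rule swap_f)
    finally show ?thesis .
  qed
  ultimately show "\<exists>ds \<in> B n. (\<forall>i<n. snd ds i \<le> snd z i) \<and> f n z ds = f n z d" by blast
qed

end
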